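(* Let $V\subset\mathbb{S}^3$ be a saturated open set and $\zeta$ a smooth unit vector field on $V$ whose integral curves are great circles. Define $f:V\to\mathbb{S}^2:=\{q\in\operatorname{Im}\mathbb{H}:|q|=1\}$ by $f(p)=\overline{p}\cdot\zeta(p)$ (quaternionic multiplication). Then $f$ is constant along the integral curves of $\zeta$, and $f$ is a harmonic map (with respect to the round metrics of $\mathbb{S}^3$ and $\mathbb{S}^2$) if and only if $\zeta$ is a harmonic unit vector field, i.e. $\Delta\zeta+|\nabla\zeta|^2\zeta=0$ on $V$.
   Context: $\mathbb{S}^3$ is the set of unit quaternions in $\mathbb{H}\cong\mathbb{R}^4$ with round metric and Levi-Civita connection $\nabla$; $\overline{p}$ is the quaternionic conjugate. An open set $V\subset\mathbb{S}^3$ carrying a unit vector field $\zeta$ whose integral curves are great circles is called saturated if for every $x\in V$ the whole great circle through $x$ tangent to $\zeta(x)$ lies in $V$. $\Delta\zeta=\operatorname{trace}\nabla^2\zeta$ is the rough Laplacian, where $\nabla^2_{v,w}\zeta=\nabla_v\nabla_w\zeta-\nabla_{\nabla_vw}\zeta$. A unit vector field is harmonic (a critical point of the energy $\tfrac12\int|\nabla\zeta|^2$ under variations through unit vector fields) iff $\Delta\zeta+|\nabla\zeta|^2\zeta=0$. A map is harmonic if its tension field (trace of its Hessian) vanishes. *)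

theory Defs
  imports "HOL-Analysis.Analysis"
begin

text \<open>Quaternions are modelled as real^4 with components 1,2,3,4 = (real, i, j, k).\<close>

type_synonym quat = "real^4"

definition qmul :: "quat \<Rightarrow> quat \<Rightarrow> quat" where
  "qmul p q = vector
     [p$1*q$1 - p$2*q$2 - p$3*q$3 - p$4*q$4,
      p$1*q$2 + p$2*q$1 + p$3*q$4 - p$4*q$3,
      p$1*q$3 - p$2*q$4 + p$3*q$1 + p$4*q$2,
      p$1*q$4 + p$2*q$3 - p$3*q$2 + p$4*q$1]"

definition qconj :: "quat \<Rightarrow> quat" where
  "qconj p = vector [p$1, - p$2, - p$3, - p$4]"

definition S3 :: "quat set" where
  "S3 = sphere 0 1"

definition S2 :: "quat set" where
  "S2 = {q. q$1 = 0 \<and> norm q = 1}"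

fun Ck :: "nat \<Rightarrow> 'a::real_normed_vector set \<Rightarrow> ('a \<Rightarrow> 'b::real_normed_vector) \<Rightarrow> bool" where
  "Ck 0 S f = continuous_on S f"
| "Ck (Suc k) S f = (f differentiable_on S \<and>
      (\<forall>v. Ck k S (\<lambda>x. frechet_derivative f (at x) v)))"

definition Cinf_on :: "'a::real_normed_vector set \<Rightarrow> ('a \<Rightarrow> 'b::real_normed_vector) \<Rightarrow> bool" where
  "Cinf_on S f = (\<forall>k. Ck k S f)"

definition smooth_on_S3 :: "quat set \<Rightarrow> (quat \<Rightarrow> 'b::real_normed_vector) \<Rightarrow> bool" where
  "smooth_on_S3 V g = (\<exists>U Z. open U \<and> V \<subseteq> U \<and> Cinf_on U Z \<and> (\<forall>p\<in>V. Z p = g p))"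

definition gc :: "quat \<Rightarrow> quat \<Rightarrow> real \<Rightarrow> quat" where
  "gc p v t = cos t *\<^sub>R p + sin t *\<^sub>R v"

definition tproj :: "quat \<Rightarrow> quat \<Rightarrow> quat" where
  "tproj p w = w - (w \<bullet> p) *\<^sub>R p"

definition saturated :: "quat set \<Rightarrow> (quat \<Rightarrow> quat) \<Rightarrow> bool" where
  "saturated V \<zeta> = (\<forall>p\<in>V. \<forall>t. gc p (\<zeta> p) t \<in> V)"

definition tangent_onb :: "quat \<Rightarrow> (nat \<Rightarrow> quat) \<Rightarrow> bool" where
  "tangent_onb p e = ((\<forall>i<3. norm (e i) = 1 \<and> e i \<bullet> p = 0) \<and>
      (\<forall>i<3. \<forall>j<3. i \<noteq> j \<longrightarrow> e i \<bullet> e j = 0))"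

text \<open>Hessian (\<nabla> df)(v,v) of f : S^3 \<supseteq> V \<rightarrow> S^2 at p: computed along the geodesic
  gc p v, the Levi-Civita connection of S^2 being the tangential projection of the
  ambient derivative.\<close>
definition map_hess :: "(quat \<Rightarrow> quat) \<Rightarrow> quat \<Rightarrow> quat \<Rightarrow> quat" where
  "map_hess f p v = tproj (f p)
     (vector_derivative (\<lambda>t. vector_derivative (\<lambda>s. f (gc p v s)) (at t)) (at 0))"

definition harmonic_map_on :: "quat set \<Rightarrow> (quat \<Rightarrow> quat) \<Rightarrow> bool" where
  "harmonic_map_on V f = (\<forall>p\<in>V. \<forall>e. tangent_onb p e \<longrightarrow> (\<Sum>i<3. map_hess f p (e i)) = 0)"

definition cov :: "(quat \<Rightarrow> quat) \<Rightarrow> quat \<Rightarrow> quat \<Rightarrow> quat" where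
  "cov \<zeta> p v = tproj p (vector_derivative (\<lambda>t. \<zeta> (gc p v t)) (at 0))"

text \<open>Second covariant derivative \<nabla>^2_{v,v} \<zeta> at p, computed along the geodesic gc p v
  (so the term \<nabla>_{\<nabla>_v v} vanishes).\<close>
definition cov2 :: "(quat \<Rightarrow> quat) \<Rightarrow> quat \<Rightarrow> quat \<Rightarrow> quat" where
  "cov2 \<zeta> p v = tproj p (vector_derivative
     (\<lambda>t. tproj (gc p v t) (vector_derivative (\<lambda>s. \<zeta> (gc p v s)) (at t))) (at 0))"

definition harmonic_unit_field_on :: "quat set \<Rightarrow> (quat \<Rightarrow> quat) \<Rightarrow> bool" where
  "harmonic_unit_field_on V \<zeta> = (\<forall>p\<in>V. \<forall>e. tangent_onb p e \<longrightarrow>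
      (\<Sum>i<3. cov2 \<zeta> p (e i)) + (\<Sum>i<3. (norm (cov \<zeta> p (e i)))\<^sup>2) *\<^sub>R \<zeta> p = 0)"

end

theory Submission
  imports Defs
begin


lemma vector_4 [simp]:
  "(vector [a,b,c,d] :: 'a::zero^4) $ 1 = a"
  "(vector [a,b,c,d] :: 'a::zero^4) $ 2 = b"
  "(vector [a,b,c,d] :: 'a::zero^4) $ 3 = c"
  "(vector [a,b,c,d] :: 'a::zero^4) $ 4 = d"
  unfolding vector_def by simp_all

lemma inner4: "(x::quat) \<bullet> y = x$1*y$1 + x$2*y$2 + x$3*y$3 + x$4*y$4"
  by (simp add: inner_vec_def sum_4)

lemma quat_eq_iff: "(x::quat) = y \<longleftrightarrow> x$1 = y$1 \<and> x$2 = y$2 \<and> x$3 = y$3 \<and> x$4 = y$4"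
  by (simp add: vec_eq_iff forall_4)

lemma qmul_comp [simp]:
  "qmul p q $ 1 = p$1*q$1 - p$2*q$2 - p$3*q$3 - p$4*q$4"
  "qmul p q $ 2 = p$1*q$2 + p$2*q$1 + p$3*q$4 - p$4*q$3"
  "qmul p q $ 3 = p$1*q$3 - p$2*q$4 + p$3*q$1 + p$4*q$2"
  "qmul p q $ 4 = p$1*q$4 + p$2*q$3 - p$3*q$2 + p$4*q$1"
  by (simp_all add: qmul_def)

lemma qconj_comp [simp]:
  "qconj p $ 1 = p$1" "qconj p $ 2 = - p$2" "qconj p $ 3 = - p$3" "qconj p $ 4 = - p$4"
  by (simp_all add: qconj_def)

lemma bilinear_qmul: "bilinear qmul"
  unfolding bilinear_def
  apply (intro conjI allI linearI)
  by (simp_all add: quat_eq_iff algebra_simps)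

lemma bb_qmul: "bounded_bilinear qmul"
  using bilinear_qmul bilinear_conv_bounded_bilinear by blast

lemma linear_qconj: "linear qconj"
  by (intro linearI) (simp_all add: quat_eq_iff)

lemma bl_qconj: "bounded_linear qconj"
  using linear_qconj linear_conv_bounded_linear by blast

lemma norm2_4: "(norm (x::quat))^2 = x$1^2 + x$2^2 + x$3^2 + x$4^2"
  unfolding power2_norm_eq_inner inner4 by (simp add: power2_eq_square)

definition qone :: quat where "qone = vector [1,0,0,0]"

lemma qone_comp [simp]: "qone$1 = 1" "qone$2 = 0" "qone$3 = 0" "qone$4 = 0"
  by (simp_all add: qone_def)

lemma inner_qone [simp]: "x \<bullet> qone = x$1" "qone \<bullet> x = x$1"
  by (simp_all add: inner4)

lemma qmul_assoc: "qmul (qmul a b) c = qmul a (qmul b c)"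
  by (simp add: quat_eq_iff algebra_simps)

lemma qmul_one [simp]: "qmul a qone = a" "qmul qone a = a"
  by (simp_all add: quat_eq_iff)

lemma qmul_conj_cancel: "qmul p (qmul (qconj p) x) = (p \<bullet> p) *\<^sub>R x"
  by (simp add: quat_eq_iff inner4 algebra_simps)

lemma qmul_conj_cancel': "qmul (qconj p) (qmul p x) = (p \<bullet> p) *\<^sub>R x"
  by (simp add: quat_eq_iff inner4 algebra_simps)

lemma qK1: "(qmul (qconj a) b) \<bullet> w = b \<bullet> (qmul a w)"
  by (simp add: inner4 algebra_simps)

lemma qK2: "(qmul p x) \<bullet> (qmul p y) = (p \<bullet> p) * (x \<bullet> y)"
  by (simp add: inner4 algebra_simps)

lemma qK2c: "(qmul (qconj p) x) \<bullet> (qmul (qconj p) y) = (p \<bullet> p) * (x \<bullet> y)"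
  by (simp add: inner4 algebra_simps)

lemma q_re: "(qmul (qconj a) b)$1 = a \<bullet> b"
  by (simp add: inner4)

lemma qconj_qmul: "qconj (qmul a b) = qmul (qconj b) (qconj a)"
  by (simp add: quat_eq_iff algebra_simps)

lemma qconj_qconj [simp]: "qconj (qconj a) = a"
  by (simp add: quat_eq_iff)

lemma qconj_im: "x$1 = 0 \<Longrightarrow> qconj x = - x"
  by (simp add: quat_eq_iff)

lemma norm_qmul: "norm (qmul a b) = norm a * norm b"
proof -
  have "(norm (qmul a b))^2 = ((norm a) * (norm b))^2"
    unfolding power_mult_distrib norm2_4 by (simp add: algebra_simps power2_eq_square)
  then show ?thesis by (simp add: power2_eq_iff_nonneg)
qed

lemma qK4:
  assumes "b$1 = 0" "w$1 = 0" "q$1 = 0" "q \<bullet> q = 1" "b \<bullet> q = 0" "w \<bullet> q = 0"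
  shows "qmul b w = (- (b \<bullet> w)) *\<^sub>R qone + ((qmul b w) \<bullet> q) *\<^sub>R q"
  using assms unfolding quat_eq_iff inner4
  by simp algebra


lemma sum3: "(\<Sum>i<(3::nat). f i) = f 0 + f 1 + f 2"
  by (simp add: eval_nat_numeral)

lemma qmul_add_left: "qmul (a + b) c = qmul a c + qmul b c"
  and qmul_add_right: "qmul c (a + b) = qmul c a + qmul c b"
  and qmul_diff_left: "qmul (a - b) c = qmul a c - qmul b c"
  and qmul_diff_right: "qmul c (a - b) = qmul c a - qmul c b"
  and qmul_scaleR_left: "qmul (r *\<^sub>R a) c = r *\<^sub>R qmul a c"
  and qmul_scaleR_right: "qmul c (r *\<^sub>R a) = r *\<^sub>R qmul c a"
  and qmul_minus_left: "qmul (- a) c = - qmul a c"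
  and qmul_minus_right: "qmul c (- a) = - qmul c a"
  and qmul_zero: "qmul 0 c = 0" "qmul c 0 = 0"
  using bb_qmul
  by (simp_all add: bounded_bilinear.add_left bounded_bilinear.add_right
     bounded_bilinear.diff_left bounded_bilinear.diff_right bounded_bilinear.scaleR_left
     bounded_bilinear.scaleR_right bounded_bilinear.minus_left bounded_bilinear.minus_right
     bounded_bilinear.zero_left bounded_bilinear.zero_right)

lemmas qmul_lin = qmul_add_left qmul_add_right qmul_diff_left qmul_diff_right
  qmul_scaleR_left qmul_scaleR_right qmul_minus_left qmul_minus_right qmul_zero

lemma keyK:
  assumes pp: "p \<bullet> p = 1" and zz: "z \<bullet> z = 1" and zp: "z \<bullet> p = 0"
    and ap: "a \<bullet> p = 0" and az: "a \<bullet> z = 0"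
    and w1: "w$1 = 0" and wq: "w \<bullet> qmul (qconj p) z = 0"
    and C1: "\<And>v. v \<bullet> p = 0 \<Longrightarrow> L v \<bullet> z = 0"
    and C2: "\<And>v. v \<bullet> p = 0 \<Longrightarrow> L v \<bullet> p = - (z \<bullet> v)"
  shows "L a \<bullet> qmul a w = 0"
proof -
  define q where "q = qmul (qconj p) z"
  define b where "b = qmul (qconj p) a"
  have abp: "a = qmul p b" unfolding b_def by (simp add: qmul_conj_cancel pp)
  have b1: "b$1 = 0" unfolding b_def q_re using ap by (simp add: inner_commute)
  have q1: "q$1 = 0" unfolding q_def q_re using zp by (simp add: inner_commute)
  have qq: "q \<bullet> q = 1" unfolding q_def qK2c using pp zz by simp
  have bq: "b \<bullet> q = 0" unfolding b_def q_def qK2c using pp az by simp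
  have pq: "qmul p q = z" unfolding q_def by (simp add: qmul_conj_cancel pp)
  have bw: "qmul b w = (- (b \<bullet> w)) *\<^sub>R qone + ((qmul b w) \<bullet> q) *\<^sub>R q"
    using qK4[OF b1 w1 q1 qq bq] wq unfolding q_def by simp
  have aw: "qmul a w = (- (b \<bullet> w)) *\<^sub>R p + ((qmul b w) \<bullet> q) *\<^sub>R z"
    by (subst abp, subst qmul_assoc, subst bw) (simp add: qmul_lin pq)
  show ?thesis unfolding aw
    using C1[OF ap] C2[OF ap] az by (simp add: inner_diff_right inner_add_right inner_commute)
qed


lemma p_zw:
  assumes pp: "p \<bullet> p = 1" and zp: "z \<bullet> p = 0" and w1: "w$1 = 0" and wq: "w \<bullet> qmul (qconj p) z = 0"
  shows "p \<bullet> qmul z w = 0"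
proof -
  define q where "q = qmul (qconj p) z"
  have pq: "qmul p q = z" unfolding q_def by (simp add: qmul_conj_cancel pp)
  have "p \<bullet> qmul z w = (qmul p qone) \<bullet> qmul p (qmul q w)"
    by (simp add: pq[symmetric] qmul_assoc)
  also have "\<dots> = (qmul q w)$1" unfolding qK2 pp by simp
  also have "\<dots> = 0" using w1 wq zp unfolding q_def by (simp add: inner4 algebra_simps)
  finally show ?thesis .
qed

lemma keyKsum:
  assumes pp: "p \<bullet> p = 1" and zz: "z \<bullet> z = 1" and zp: "z \<bullet> p = 0"
    and onb: "tangent_onb p e"
    and compl: "z = (\<Sum>i<3. (z \<bullet> e i) *\<^sub>R e i)"
    and lin: "linear L"
    and C1: "\<And>v. v \<bullet> p = 0 \<Longrightarrow> L v \<bullet> z = 0"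
    and C2: "\<And>v. v \<bullet> p = 0 \<Longrightarrow> L v \<bullet> p = - (z \<bullet> v)"
    and C3: "L z = - p"
    and w1: "w$1 = 0" and wq: "w \<bullet> qmul (qconj p) z = 0"
  shows "(\<Sum>i<3. qmul (qconj (e i)) (L (e i))) \<bullet> w = 0"
proof -
  define c where "c i = z \<bullet> e i" for i
  define a where "a i = e i - c i *\<^sub>R z" for i
  have ep: "e i \<bullet> p = 0" if "i < 3" for i using onb that unfolding tangent_onb_def by auto
  have ap: "a i \<bullet> p = 0" if "i < 3" for i
    unfolding a_def using ep[OF that] zp by (simp add: inner_diff_left)
  have az: "a i \<bullet> z = 0" for i
    unfolding a_def c_def using zz by (simp add: inner_diff_left inner_diff_right inner_commute)
  have Le: "L (e i) = L (a i) - c i *\<^sub>R p" for i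
  proof -
    have "e i = a i + c i *\<^sub>R z" unfolding a_def by simp
    then have "L (e i) = L (a i) + c i *\<^sub>R L z"
      by (metis lin linear_add linear_scale)
    then show ?thesis using C3 by simp
  qed
  have trm: "qmul (qconj (e i)) (L (e i)) \<bullet> w
      = L (a i) \<bullet> qmul (a i) w + c i * (L (a i) \<bullet> qmul z w) - c i * (p \<bullet> qmul (e i) w)" for i
  proof -
    have ew: "qmul (e i) w = qmul (a i) w + c i *\<^sub>R qmul z w"
      unfolding a_def by (simp add: qmul_lin)
    show ?thesis unfolding qK1 Le
      by (simp add: inner_diff_left inner_add_right ew algebra_simps)
  qed
  have cc: "(\<Sum>i<3. c i * c i) = 1"
  proof -
    have "z \<bullet> z = (\<Sum>i<3. c i * c i)"
      by (subst (2) compl) (simp add: inner_sum_right c_def)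
    then show ?thesis using zz by simp
  qed
  have ca: "(\<Sum>i<3. c i *\<^sub>R a i) = 0"
  proof -
    have "(\<Sum>i<3. c i *\<^sub>R a i) = (\<Sum>i<3. c i *\<^sub>R e i) - (\<Sum>i<3. c i * c i) *\<^sub>R z"
      unfolding a_def by (simp add: scaleR_diff_right sum_subtractf scaleR_sum_left)
    also have "\<dots> = 0" using compl cc unfolding c_def by simp
    finally show ?thesis .
  qed
  have s1: "(\<Sum>i<3. L (a i) \<bullet> qmul (a i) w) = 0"
    by (rule sum.neutral) (auto intro!: keyK[OF pp zz zp _ _ w1 wq C1 C2] ap az)
  have s2: "(\<Sum>i<3. c i * (L (a i) \<bullet> qmul z w)) = 0"
  proof -
    have "(\<Sum>i<3. c i * (L (a i) \<bullet> qmul z w)) = L (\<Sum>i<3. c i *\<^sub>R a i) \<bullet> qmul z w"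
      by (simp add: linear_sum[OF lin] linear_scale[OF lin] inner_sum_left)
    then show ?thesis using ca lin by (simp add: linear_0)
  qed
  have s3: "(\<Sum>i<3. c i * (p \<bullet> qmul (e i) w)) = 0"
  proof -
    have "(\<Sum>i<3. c i * (p \<bullet> qmul (e i) w)) = p \<bullet> qmul (\<Sum>i<3. c i *\<^sub>R e i) w"
      using bb_qmul by (simp add: bounded_bilinear.sum_left qmul_scaleR_left inner_sum_right)
    also have "\<dots> = p \<bullet> qmul z w" using compl unfolding c_def by simp
    also have "\<dots> = 0" by (rule p_zw[OF pp zp w1 wq])
    finally show ?thesis .
  qed
  show ?thesis
    unfolding inner_sum_left trm using s1 s2 s3
    by (simp add: sum_subtractf sum.distrib)
qed

lemma qconj_self: "qmul (qconj p) p = (p \<bullet> p) *\<^sub>R qone"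
  by (simp add: quat_eq_iff inner4 algebra_simps)

lemma norm_tproj2:
  assumes "p \<bullet> p = 1" shows "(norm (tproj p v))\<^sup>2 = v \<bullet> v - (v \<bullet> p)\<^sup>2"
  using assms unfolding power2_norm_eq_inner tproj_def
  by (simp add: inner_diff_left inner_diff_right inner_commute power2_eq_square)

lemma pointwise:
  assumes pp: "p \<bullet> p = 1" and zz: "z \<bullet> z = 1" and zp: "z \<bullet> p = 0"
    and onb: "tangent_onb p e"
    and compl: "z = (\<Sum>i<3. (z \<bullet> e i) *\<^sub>R e i)"
    and lin: "linear L"
    and C1: "\<And>v. v \<bullet> p = 0 \<Longrightarrow> L v \<bullet> z = 0"
    and C2: "\<And>v. v \<bullet> p = 0 \<Longrightarrow> L v \<bullet> p = - (z \<bullet> v)"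
    and C3: "L z = - p"
    and G1: "\<And>i. i<3 \<Longrightarrow> G i \<bullet> p + 2 * (L (e i) \<bullet> e i) = 0"
    and G2: "\<And>i. i<3 \<Longrightarrow> L (e i) \<bullet> L (e i) + z \<bullet> G i = 0"
  shows "(\<Sum>i<3. tproj (qmul (qconj p) z) (qmul (qconj p) (G i) + 2 *\<^sub>R qmul (qconj (e i)) (L (e i)) - qmul (qconj p) z)) = 0
     \<longleftrightarrow> (\<Sum>i<3. tproj p (G i - (G i \<bullet> p + L (e i) \<bullet> e i) *\<^sub>R p - (L (e i) \<bullet> p) *\<^sub>R e i))
          + (\<Sum>i<3. (norm (tproj p (L (e i))))\<^sup>2) *\<^sub>R z = 0"
    (is "?A = 0 \<longleftrightarrow> ?H = 0")
proof -
  define q where "q = qmul (qconj p) z"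
  define F where "F i = qmul (qconj p) (G i) + 2 *\<^sub>R qmul (qconj (e i)) (L (e i)) - q" for i
  define S where "S = (\<Sum>i<3. F i)"
  define K where "K = (\<Sum>i<3. qmul (qconj (e i)) (L (e i)))"
  define P where "P x = x - x$1 *\<^sub>R qone - (x \<bullet> q) *\<^sub>R q" for x
  have ep: "e i \<bullet> p = 0" if "i < 3" for i using onb that unfolding tangent_onb_def by auto
  have q1: "q$1 = 0" unfolding q_def q_re using zp by (simp add: inner_commute)
  have qq: "q \<bullet> q = 1" unfolding q_def qK2c using pp zz by simp
  have pq: "qmul p q = z" unfolding q_def by (simp add: qmul_conj_cancel pp)
  have linP: "linear P"
    by (intro linearI) (simp_all add: P_def algebra_simps inner_add_left)
  have decomp: "x = x$1 *\<^sub>R qone + (x \<bullet> q) *\<^sub>R q + P x" for x by (simp add: P_def)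
  have Pq: "P q = 0" unfolding P_def using q1 qq by simp
  have Pone: "P qone = 0" unfolding P_def using q1 by (simp add: inner_commute)
  have P1: "(P x)$1 = 0" for x unfolding P_def using q1 by simp
  have Pqz: "P x \<bullet> q = 0" for x unfolding P_def using q1 qq by (simp add: inner_diff_left)
  have Pzero: "x = 0" if "x$1 = 0" "x \<bullet> q = 0" "P x = 0" for x
    using decomp[of x] that by simp
  have tq: "tproj q x = P x + x$1 *\<^sub>R qone" for x
    unfolding tproj_def P_def by simp
  have linT: "linear (tproj q)"
    by (intro linearI) (simp_all add: tproj_def algebra_simps inner_add_left)
  have A_eq: "?A = tproj q S"
    unfolding S_def linear_sum[OF linT] unfolding F_def q_def ..
  have PK: "P K = 0"
  proof -
    have "K \<bullet> P K = 0"
      unfolding K_def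
      by (rule keyKsum[OF pp zz zp onb compl lin C1 C2 C3]) (use P1 Pqz q_def in auto)
    then have "P K \<bullet> P K = 0"
      using P1 Pqz by (simp add: P_def inner_diff_left inner_commute)
    then show ?thesis by simp
  qed
  have S1: "S$1 = 0"
  proof -
    have "(F i)$1 = 0" if "i<3" for i
      using G1[OF that] zp unfolding F_def q_def
      by (simp add: q_re[unfolded inner4] inner4 algebra_simps)
    then show ?thesis unfolding S_def by (simp add: sum3)
  qed
  have PS: "P S = (\<Sum>i<3. P (qmul (qconj p) (G i)))"
  proof -
    have S_eq: "S = (\<Sum>i<3. qmul (qconj p) (G i)) + 2 *\<^sub>R K - 3 *\<^sub>R q"
      unfolding S_def F_def K_def sum3 by (simp add: vec_eq_iff algebra_simps)
    have "P S = (\<Sum>i<3. P (qmul (qconj p) (G i))) + 2 *\<^sub>R P K - 3 *\<^sub>R P q"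
      unfolding S_eq
      by (simp add: linear_sum[OF linP] linear_diff[OF linP] linear_add[OF linP]
          linear_scale[OF linP])
    then show ?thesis using PK Pq by simp
  qed
  define N where "N = (\<Sum>i<3. (norm (tproj p (L (e i))))\<^sup>2)"
  define X where "X i = G i - (G i \<bullet> p + L (e i) \<bullet> e i) *\<^sub>R p - (L (e i) \<bullet> p) *\<^sub>R e i" for i
  have H_eq: "?H = (\<Sum>i<3. tproj p (X i)) + N *\<^sub>R z" unfolding X_def N_def by simp
  have Lp: "L (e i) \<bullet> p = - (z \<bullet> e i)" if "i<3" for i using C2[OF ep[OF that]] .
  have pH: "qmul (qconj p) ?H = (\<Sum>i<3. qmul (qconj p) (G i) - (G i \<bullet> p + L (e i) \<bullet> e i + X i \<bullet> p) *\<^sub>R qone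
                 - (L (e i) \<bullet> p) *\<^sub>R qmul (qconj p) (e i)) + N *\<^sub>R q"
    unfolding H_eq unfolding tproj_def X_def q_def
    by (simp add: qmul_lin bounded_bilinear.sum_right[OF bb_qmul] qconj_self pp algebra_simps)
  have sumLp: "(\<Sum>i<3. (L (e i) \<bullet> p) *\<^sub>R qmul (qconj p) (e i)) = - q"
  proof -
    have "(\<Sum>i<3. (L (e i) \<bullet> p) *\<^sub>R qmul (qconj p) (e i)) = - qmul (qconj p) (\<Sum>i<3. (z \<bullet> e i) *\<^sub>R e i)"
      using Lp by (simp add: bounded_bilinear.sum_right[OF bb_qmul] qmul_lin sum_negf)
    then show ?thesis using compl unfolding q_def by simp
  qed
  have PpH: "P (qmul (qconj p) ?H) = P S"
  proof -
    have "P (qmul (qconj p) ?H) = (\<Sum>i<3. P (qmul (qconj p) (G i)))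
            - P (\<Sum>i<3. (L (e i) \<bullet> p) *\<^sub>R qmul (qconj p) (e i)) + N *\<^sub>R P q"
      unfolding pH
      by (simp add: linear_sum[OF linP] linear_diff[OF linP] linear_add[OF linP]
          linear_scale[OF linP] sum_subtractf Pone)
    then show ?thesis unfolding sumLp PS using Pq linear_neg[OF linP] by simp
  qed
  have Hp: "?H \<bullet> p = 0"
    unfolding H_eq using zp pp by (simp add: inner_add_left inner_sum_left tproj_def inner_diff_left)
  have Hz: "?H \<bullet> z = 0"
  proof -
    have tz: "tproj p (X i) \<bullet> z = G i \<bullet> z + (z \<bullet> e i)^2" if "i<3" for i
    proof -
      have pz: "p \<bullet> z = 0" using zp by (simp add: inner_commute)
      have ez: "e i \<bullet> z = z \<bullet> e i" by (simp add: inner_commute)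
      show ?thesis unfolding tproj_def X_def
        using pz ez Lp[OF that] by (simp add: inner_diff_left inner_add_left power2_eq_square)
    qed
    have "?H \<bullet> z = (\<Sum>i<3. tproj p (X i) \<bullet> z) + N"
      unfolding H_eq using zz by (simp add: inner_add_left inner_sum_left)
    also have "\<dots> = (\<Sum>i<3. G i \<bullet> z + (z \<bullet> e i)^2) + N"
      using tz by simp
    finally have "?H \<bullet> z = (\<Sum>i<3. G i \<bullet> z + (z \<bullet> e i)^2) + N" .
    also have "N = (\<Sum>i<3. L (e i) \<bullet> L (e i) - (z \<bullet> e i)^2)"
      unfolding N_def norm_tproj2[OF pp] using Lp by (simp add: sum3)
    finally have "?H \<bullet> z = (\<Sum>i<3. G i \<bullet> z + L (e i) \<bullet> L (e i))"
      by (simp add: sum3)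
    also have "\<dots> = 0" using G2[of 0] G2[of 1] G2[of 2] by (simp add: sum3 inner_commute)
    finally show ?thesis .
  qed
  have pH1: "(qmul (qconj p) ?H)$1 = 0"
  proof -
    have "(qmul (qconj p) ?H)$1 = p \<bullet> ?H" by (rule q_re)
    also have "\<dots> = ?H \<bullet> p" by (rule inner_commute)
    finally show ?thesis using Hp by simp
  qed
  have pHq: "(qmul (qconj p) ?H) \<bullet> q = 0" unfolding qK1 pq using Hz .
  show ?thesis
  proof
    assume "?A = 0"
    then have "tproj q S = 0" using A_eq by simp
    then have "P S = 0" unfolding tq using S1 by simp
    then have "qmul (qconj p) ?H = 0" using Pzero[OF pH1 pHq] PpH by simp
    then have "qmul p (qmul (qconj p) ?H) = 0" by (simp add: qmul_lin)
    then show "?H = 0" unfolding qmul_conj_cancel pp by simp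
  next
    assume "?H = 0"
    then have "P S = 0" using PpH linear_0[OF linP] by (simp add: qmul_zero)
    then show "?A = 0" unfolding A_eq tq using S1 by simp
  qed
qed

lemma completeness:
  assumes pp: "p \<bullet> p = 1" and onb: "tangent_onb p e" and xp: "x \<bullet> p = 0"
  shows "x = (\<Sum>i<3. (x \<bullet> e i) *\<^sub>R e i)"
proof -
  have n: "e i \<bullet> e i = 1" "e i \<bullet> p = 0" if "i<3" for i
    using onb that unfolding tangent_onb_def by (auto simp: power2_norm_eq_inner[symmetric])
  have o: "e i \<bullet> e j = 0" if "i<3" "j<3" "i \<noteq> j" for i j
    using onb that unfolding tangent_onb_def by auto
  define B where "B = {p, e 0, e 1, e 2}"
  have d: "p \<noteq> e 0" "p \<noteq> e 1" "p \<noteq> e 2" "e 0 \<noteq> e 1" "e 0 \<noteq> e 2" "e 1 \<noteq> e 2"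
    using n[of 0] n[of 1] n[of 2] o[of 0 1] o[of 0 2] o[of 1 2] pp by (auto simp: inner_commute)
  have cardB: "card B = 4" unfolding B_def using d by simp
  have pw: "pairwise orthogonal B"
    unfolding B_def pairwise_def orthogonal_def
    using n[of 0] n[of 1] n[of 2] o[of 0 1] o[of 0 2] o[of 1 2] o[of 1 0] o[of 2 0] o[of 2 1]
    by (auto simp: inner_commute)
  have nz: "0 \<notin> B" unfolding B_def using n[of 0] n[of 1] n[of 2] pp by auto
  have ind: "independent B" by (rule pairwise_orthogonal_independent[OF pw nz])
  have "dim B = card B" using ind by (simp add: dim_eq_card_independent)
  then have "dim B = DIM(quat)" using cardB by simp
  then have spanB: "span B = UNIV" using dim_eq_full by blast
  define y where "y = x - (\<Sum>i<3. (x \<bullet> e i) *\<^sub>R e i)"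
  have yB: "orthogonal y b" if "b \<in> B" for b
  proof -
    have "y \<bullet> p = 0" unfolding y_def using xp n by (simp add: inner_diff_left inner_sum_left)
    moreover have "y \<bullet> e j = 0" if "j<3" for j
      unfolding y_def using that n[of 0] n[of 1] n[of 2] o[of 0 1] o[of 0 2] o[of 1 2] o[of 1 0] o[of 2 0] o[of 2 1]
      by (auto simp: inner_diff_left inner_add_left sum3 less_Suc_eq eval_nat_numeral)
    ultimately show ?thesis using that unfolding B_def orthogonal_def by auto
  qed
  have "orthogonal y y"
    using orthogonal_to_span[of y B y, OF _ yB] spanB by simp
  then have "y = 0" by (simp add: orthogonal_def)
  then show ?thesis unfolding y_def by simp
qed


lemma gc_deriv: "(gc p e has_vector_derivative (- sin t *\<^sub>R p + cos t *\<^sub>R e)) (at t)"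
  unfolding gc_def by (auto intro!: derivative_eq_intros)

lemma gcd_deriv: "((\<lambda>t. - sin t *\<^sub>R p + cos t *\<^sub>R e) has_vector_derivative (- gc p e t)) (at t)"
  unfolding gc_def by (auto intro!: derivative_eq_intros simp: algebra_simps)

lemma gc_S3:
  assumes "p \<bullet> p = 1" "e \<bullet> e = 1" "e \<bullet> p = 0"
  shows "gc p e t \<in> S3"
proof -
  have "gc p e t \<bullet> gc p e t = (cos t)^2 + (sin t)^2"
    using assms unfolding gc_def
    by (simp add: inner_add_left inner_add_right inner_commute power2_eq_square)
  then have "norm (gc p e t) = 1" by (simp add: norm_eq_1)
  then show ?thesis unfolding S3_def by simp
qed

lemma gc0 [simp]: "gc p e 0 = p" unfolding gc_def by simp

lemma gc_cont: "continuous (at t) (gc p e)"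
  using gc_deriv differentiableI_vector differentiable_imp_continuous_within by blast

lemma deriv_const_zero:
  assumes "(f has_vector_derivative D) (at t)" "open S" "t \<in> S" "\<And>s. s \<in> S \<Longrightarrow> f s = c"
  shows "D = 0"
proof -
  have "((\<lambda>s. c) has_vector_derivative 0) (at t)" by simp
  then have "(f has_vector_derivative 0) (at t)"
    by (rule has_vector_derivative_transform_within_open[OF _ assms(2,3)]) (use assms(4) in simp)
  then show ?thesis using assms(1) vector_derivative_unique_at by blast
qed


lemma curve:
  fixes \<zeta> Z :: "quat \<Rightarrow> quat" and U W V :: "quat set"
  assumes U: "open U" "V \<subseteq> U" and Zs: "Cinf_on U Z" and ZV: "\<forall>p\<in>V. Z p = \<zeta> p"
    and W: "open W" "V = S3 \<inter> W"
    and ut: "\<forall>p\<in>V. norm (\<zeta> p) = 1 \<and> \<zeta> p \<bullet> p = 0"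
    and pV: "p \<in> V" and ee: "e \<bullet> e = 1" and ep: "e \<bullet> p = 0"
  defines "L \<equiv> frechet_derivative Z (at p) e"
     and "G \<equiv> vector_derivative (\<lambda>t. vector_derivative (\<lambda>s. \<zeta> (gc p e s)) (at t)) (at 0)"
  shows "vector_derivative (\<lambda>s. \<zeta> (gc p e s)) (at 0) = L"
   and "map_hess (\<lambda>p. qmul (qconj p) (\<zeta> p)) p e = tproj (qmul (qconj p) (\<zeta> p))
          (qmul (qconj p) G + 2 *\<^sub>R qmul (qconj e) L - qmul (qconj p) (\<zeta> p))"
   and "cov2 \<zeta> p e = tproj p (G - (G \<bullet> p + L \<bullet> e) *\<^sub>R p - (L \<bullet> p) *\<^sub>R e)"
   and "cov \<zeta> p e = tproj p L"
   and "G \<bullet> p + 2 * (L \<bullet> e) = 0"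
   and "L \<bullet> L + \<zeta> p \<bullet> G = 0"
   and "L \<bullet> \<zeta> p = 0"
   and "L \<bullet> p = - (\<zeta> p \<bullet> e)"
proof -
  define DZ where "DZ x = frechet_derivative Z (at x)" for x
  have pS: "p \<in> S3" using pV W by auto
  have pp: "p \<bullet> p = 1" using pS unfolding S3_def by (simp add: dot_square_norm)
  have Ck2: "Ck (Suc (Suc 0)) U Z" using Zs unfolding Cinf_on_def by blast
  have Zdiff: "Z differentiable_on U" and D1diff: "\<And>v. (\<lambda>x. DZ x v) differentiable_on U"
    using Ck2 unfolding DZ_def by auto
  have Zd: "(Z has_derivative DZ x) (at x)" if "x \<in> U" for x
    using Zdiff that U(1) differentiable_on_eq_differentiable_at frechet_derivative_works
    unfolding DZ_def by blast
  have linDZ: "linear (DZ x)" if "x \<in> U" for x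
    using has_derivative_linear[OF Zd[OF that]] .
  have D1d: "(\<lambda>x. DZ x v) differentiable (at x)" if "x \<in> U" for x v
    using D1diff that U(1) differentiable_on_eq_differentiable_at by blast
  define gd where "gd t = - sin t *\<^sub>R p + cos t *\<^sub>R e" for t
  have gder: "(gc p e has_vector_derivative gd t) (at t)" for t unfolding gd_def by (rule gc_deriv)
  have gdder: "(gd has_vector_derivative - gc p e t) (at t)" for t unfolding gd_def by (rule gcd_deriv)
  have gd0: "gd 0 = e" unfolding gd_def by simp
  define Oo where "Oo = gc p e -` (W \<inter> U)"
  have oO: "open Oo" unfolding Oo_def
    by (rule continuous_open_vimage) (use W U gc_cont in auto)
  have O0: "0 \<in> Oo" unfolding Oo_def using pV U W by auto
  have OV: "gc p e t \<in> V" "gc p e t \<in> U" if "t \<in> Oo" for t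
    using that gc_S3[OF pp ee ep] W unfolding Oo_def by auto
  define g where "g s = \<zeta> (gc p e s)" for s
  define h where "h t = DZ (gc p e t) (gd t)" for t
  have g_der: "(g has_vector_derivative h t) (at t)" if "t \<in> Oo" for t
  proof -
    have "((Z \<circ> gc p e) has_vector_derivative DZ (gc p e t) (gd t)) (at t within UNIV)"
      by (rule vector_derivative_diff_chain_within[OF gder])
         (rule has_derivative_at_withinI[OF Zd[OF OV(2)[OF that]]])
    then have "((Z \<circ> gc p e) has_vector_derivative h t) (at t)" unfolding h_def by simp
    then show ?thesis
      by (rule has_vector_derivative_transform_within_open[OF _ oO that])
         (use OV ZV g_def in auto)
  qed
  have T_eq: "vector_derivative g (at t) = h t" if "t \<in> Oo" for t
    using g_der[OF that] vector_derivative_at by blast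
  define h2 where "h2 t = (\<Sum>b\<in>Basis. (gd t \<bullet> b) *\<^sub>R DZ (gc p e t) b)" for t
  have h_h2: "h t = h2 t" if "t \<in> Oo" for t
  proof -
    have "h t = DZ (gc p e t) (\<Sum>b\<in>Basis. (gd t \<bullet> b) *\<^sub>R b)"
      unfolding h_def by (simp add: euclidean_representation)
    also have "\<dots> = h2 t" unfolding h2_def
      using linDZ[OF OV(2)[OF that]] by (simp add: linear_sum linear_scale)
    finally show ?thesis .
  qed
  have h2d: "h2 differentiable (at 0)"
    unfolding h2_def
  proof (intro differentiable_sum ballI differentiable_scaleR)
    fix b :: quat
    show "(\<lambda>t. gd t \<bullet> b) differentiable at 0"
      using gdder differentiableI_vector by (intro differentiable_inner) auto
    show "(\<lambda>t. DZ (gc p e t) b) differentiable at 0"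
      by (rule differentiable_compose[where f="\<lambda>x. DZ x b" and g="gc p e"])
         (use D1d[of p b] pV U(2) differentiableI_vector[OF gder[of 0]] in auto)
  qed simp
  then obtain G2 where h2der: "(h2 has_vector_derivative G2) (at 0)"
    using vector_derivative_works by blast
  have hder: "(h has_vector_derivative G2) (at 0)"
    by (rule has_vector_derivative_transform_within_open[OF h2der oO O0]) (use h_h2 in auto)
  have Tder: "((\<lambda>t. vector_derivative g (at t)) has_vector_derivative G2) (at 0)"
    by (rule has_vector_derivative_transform_within_open[OF hder oO O0]) (use T_eq in auto)
  have GG: "G = G2" unfolding G_def g_def[symmetric]
    using Tder vector_derivative_at by blast
  have h0: "h 0 = L" unfolding h_def L_def DZ_def gd0 by simp
  have z0: "g 0 = \<zeta> p" unfolding g_def by simp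
  show R1: "vector_derivative (\<lambda>s. \<zeta> (gc p e s)) (at 0) = L"
    using T_eq[OF O0] h0 unfolding g_def by simp
  show "cov \<zeta> p e = tproj p L" unfolding cov_def using R1 by simp
  show "cov2 \<zeta> p e = tproj p (G - (G \<bullet> p + L \<bullet> e) *\<^sub>R p - (L \<bullet> p) *\<^sub>R e)"
  proof -
    have d1: "((\<lambda>t. vector_derivative g (at t) \<bullet> gc p e t) has_vector_derivative
               (h 0 \<bullet> e + G2 \<bullet> p)) (at 0)"
      using bounded_bilinear.has_vector_derivative[OF bounded_bilinear_inner Tder gder[of 0]]
      using T_eq[OF O0] gd0 by simp
    have d2: "((\<lambda>t. (vector_derivative g (at t) \<bullet> gc p e t) *\<^sub>R gc p e t) has_vector_derivative
               ((h 0 \<bullet> p) *\<^sub>R e + (h 0 \<bullet> e + G2 \<bullet> p) *\<^sub>R p)) (at 0)"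
      using bounded_bilinear.has_vector_derivative[OF bounded_bilinear_scaleR d1 gder[of 0]]
      using T_eq[OF O0] gd0 by simp
    have d3: "((\<lambda>t. tproj (gc p e t) (vector_derivative g (at t))) has_vector_derivative
               (G2 - ((h 0 \<bullet> p) *\<^sub>R e + (h 0 \<bullet> e + G2 \<bullet> p) *\<^sub>R p))) (at 0)"
      unfolding tproj_def by (rule has_vector_derivative_diff[OF Tder d2])
    have "G2 - ((h 0 \<bullet> p) *\<^sub>R e + (h 0 \<bullet> e + G2 \<bullet> p) *\<^sub>R p)
        = G - (G \<bullet> p + L \<bullet> e) *\<^sub>R p - (L \<bullet> p) *\<^sub>R e"
      using h0 GG by (simp add: algebra_simps)
    then show ?thesis unfolding cov2_def g_def[symmetric]
      using vector_derivative_at[OF d3] by simp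
  qed
  show "map_hess (\<lambda>p. qmul (qconj p) (\<zeta> p)) p e = tproj (qmul (qconj p) (\<zeta> p))
          (qmul (qconj p) G + 2 *\<^sub>R qmul (qconj e) L - qmul (qconj p) (\<zeta> p))"
  proof -
    define F1 where "F1 t = qmul (qconj (gc p e t)) (h t) + qmul (qconj (gd t)) (g t)" for t
    have cd: "((\<lambda>t. qconj (gc p e t)) has_vector_derivative qconj (gd t)) (at t)" for t
      by (rule bounded_linear.has_vector_derivative[OF bl_qconj gder])
    have cdd: "((\<lambda>t. qconj (gd t)) has_vector_derivative qconj (- gc p e t)) (at t)" for t
      by (rule bounded_linear.has_vector_derivative[OF bl_qconj gdder])
    have Fd: "((\<lambda>s. qmul (qconj (gc p e s)) (\<zeta> (gc p e s))) has_vector_derivative F1 t) (at t)"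
      if "t \<in> Oo" for t
      using bounded_bilinear.has_vector_derivative[OF bb_qmul cd g_der[OF that]]
      unfolding F1_def g_def by (simp add: add.commute)
    have F1d: "(F1 has_vector_derivative
        ((qmul (qconj p) G2 + qmul (qconj e) (h 0)) + (qmul (qconj e) (h 0) + qmul (qconj (- p)) (g 0)))) (at 0)"
      unfolding F1_def
      using has_vector_derivative_add[OF
          bounded_bilinear.has_vector_derivative[OF bb_qmul cd hder]
          bounded_bilinear.has_vector_derivative[OF bb_qmul cdd g_der[OF O0]]]
      by (simp add: gd0)
    have HD: "((\<lambda>t. vector_derivative (\<lambda>s. qmul (qconj (gc p e s)) (\<zeta> (gc p e s))) (at t)) has_vector_derivative
        ((qmul (qconj p) G2 + qmul (qconj e) (h 0)) + (qmul (qconj e) (h 0) + qmul (qconj (- p)) (g 0)))) (at 0)"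
      by (rule has_vector_derivative_transform_within_open[OF F1d oO O0])
         (metis Fd vector_derivative_at)
    have EQ: "(qmul (qconj p) G2 + qmul (qconj e) (h 0)) + (qmul (qconj e) (h 0) + qmul (qconj (- p)) (g 0))
       = qmul (qconj p) G + 2 *\<^sub>R qmul (qconj e) L - qmul (qconj p) (\<zeta> p)"
      using h0 z0 GG by (simp add: scaleR_2 qmul_lin linear_neg[OF linear_qconj])
    show ?thesis
      unfolding map_hess_def by (simp only: vector_derivative_at[OF HD] EQ)
  qed
  have k1: "g t \<bullet> gd t + h t \<bullet> gc p e t = 0" if "t \<in> Oo" for t
  proof (rule deriv_const_zero[OF _ oO that])
    show "((\<lambda>s. g s \<bullet> gc p e s) has_vector_derivative (g t \<bullet> gd t + h t \<bullet> gc p e t)) (at t)"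
      using bounded_bilinear.has_vector_derivative[OF bounded_bilinear_inner g_der[OF that] gder] .
    show "g s \<bullet> gc p e s = 0" if "s \<in> Oo" for s using ut OV[OF that] unfolding g_def by auto
  qed
  have k1d: "((\<lambda>t. g t \<bullet> gd t + h t \<bullet> gc p e t) has_vector_derivative
        ((g 0 \<bullet> (- p) + h 0 \<bullet> e) + (h 0 \<bullet> e + G2 \<bullet> p))) (at 0)"
    using has_vector_derivative_add[OF
        bounded_bilinear.has_vector_derivative[OF bounded_bilinear_inner g_der[OF O0] gdder]
        bounded_bilinear.has_vector_derivative[OF bounded_bilinear_inner hder gder]]
    by (simp add: gd0)
  have "(g 0 \<bullet> (- p) + h 0 \<bullet> e) + (h 0 \<bullet> e + G2 \<bullet> p) = 0"
    by (rule deriv_const_zero[OF k1d oO O0]) (use k1 in auto)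
  then show "G \<bullet> p + 2 * (L \<bullet> e) = 0" using z0 h0 GG ut pV by (simp add: inner_commute)
  show "L \<bullet> p = - (\<zeta> p \<bullet> e)" using k1[OF O0] z0 h0 gd0 by simp
  have u1: "g t \<bullet> h t + h t \<bullet> g t = 0" if "t \<in> Oo" for t
  proof (rule deriv_const_zero[OF _ oO that])
    show "((\<lambda>s. g s \<bullet> g s) has_vector_derivative (g t \<bullet> h t + h t \<bullet> g t)) (at t)"
      using bounded_bilinear.has_vector_derivative[OF bounded_bilinear_inner g_der[OF that] g_der[OF that]] .
    show "g s \<bullet> g s = 1" if "s \<in> Oo" for s using ut OV[OF that] unfolding g_def
      by (simp add: dot_square_norm)
  qed
  have u1d: "((\<lambda>t. g t \<bullet> h t + h t \<bullet> g t) has_vector_derivative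
        ((g 0 \<bullet> G2 + h 0 \<bullet> h 0) + (h 0 \<bullet> h 0 + G2 \<bullet> g 0))) (at 0)"
    using has_vector_derivative_add[OF
        bounded_bilinear.has_vector_derivative[OF bounded_bilinear_inner g_der[OF O0] hder]
        bounded_bilinear.has_vector_derivative[OF bounded_bilinear_inner hder g_der[OF O0]]] .
  have "(g 0 \<bullet> G2 + h 0 \<bullet> h 0) + (h 0 \<bullet> h 0 + G2 \<bullet> g 0) = 0"
    by (rule deriv_const_zero[OF u1d oO O0]) (use u1 in auto)
  then show "L \<bullet> L + \<zeta> p \<bullet> G = 0" using z0 h0 GG by (simp add: inner_commute)
  show "L \<bullet> \<zeta> p = 0" using u1[OF O0] z0 h0 by (simp add: inner_commute)
qed



lemma norm_qconj: "norm (qconj p) = norm p"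
proof -
  have "(norm (qconj p))^2 = (norm p)^2" unfolding norm2_4 by simp
  then show ?thesis by (simp add: power2_eq_iff_nonneg)
qed

lemma const_circle:
  assumes pp: "p \<bullet> p = 1" and zz: "z \<bullet> z = 1" and zp: "z \<bullet> p = 0"
  shows "qmul (qconj (gc p z t)) (- sin t *\<^sub>R p + cos t *\<^sub>R z) = qmul (qconj p) z"
proof -
  define q where "q = qmul (qconj p) z"
  have a: "qmul (qconj p) p = qone" using qconj_self[of p] pp by simp
  have b: "qmul (qconj z) z = qone" using qconj_self[of z] zz by simp
  have c: "qmul (qconj z) p = - q"
  proof -
    have "qmul (qconj z) p = qconj q" unfolding q_def qconj_qmul by simp
    also have "\<dots> = - q"
    proof (rule qconj_im)
      show "q$1 = 0" unfolding q_def q_re using zp by (simp add: inner_commute)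
    qed
    finally show ?thesis .
  qed
  have qc: "qconj (gc p z t) = cos t *\<^sub>R qconj p + sin t *\<^sub>R qconj z"
    unfolding gc_def using linear_qconj by (simp add: linear_add linear_scale)
  have "qmul (qconj (gc p z t)) (- sin t *\<^sub>R p + cos t *\<^sub>R z)
      = (cos t * cos t) *\<^sub>R q + (sin t * sin t) *\<^sub>R q"
    unfolding qc by (simp add: qmul_lin a b c q_def[symmetric] algebra_simps)
  also have "\<dots> = ((cos t)^2 + (sin t)^2) *\<^sub>R q"
    by (simp only: scaleR_add_left power2_eq_square)
  also have "\<dots> = q" by simp
  finally show ?thesis unfolding q_def .
qed

lemma circ:
  assumes "\<forall>t. (gc p z has_vector_derivative \<zeta> (gc p z t)) (at t)"
  shows "\<zeta> (gc p z t) = - sin t *\<^sub>R p + cos t *\<^sub>R z"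
  using assms gc_deriv vector_derivative_unique_at by blast


theorem theoremB:
  fixes V :: "quat set" and \<zeta> :: "quat \<Rightarrow> quat"
  assumes V_open: "openin (top_of_set S3) V"
    and unit_tangent: "\<forall>p\<in>V. norm (\<zeta> p) = 1 \<and> \<zeta> p \<bullet> p = 0"
    and smooth: "smooth_on_S3 V \<zeta>"
    and sat: "saturated V \<zeta>"
    and great_circles: "\<forall>p\<in>V. \<forall>t. (gc p (\<zeta> p) has_vector_derivative \<zeta> (gc p (\<zeta> p) t)) (at t)"
  shows "(\<forall>p\<in>V. qmul (qconj p) (\<zeta> p) \<in> S2)
    \<and> (\<forall>p\<in>V. \<forall>t. qmul (qconj (gc p (\<zeta> p) t)) (\<zeta> (gc p (\<zeta> p) t)) = qmul (qconj p) (\<zeta> p))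
    \<and> (harmonic_map_on V (\<lambda>p. qmul (qconj p) (\<zeta> p)) \<longleftrightarrow> harmonic_unit_field_on V \<zeta>)"
proof -
  obtain W where W: "open W" "V = S3 \<inter> W" using V_open by (auto simp: openin_open)
  obtain U Z where U: "open U" "V \<subseteq> U" and Zs: "Cinf_on U Z" and ZV: "\<forall>p\<in>V. Z p = \<zeta> p"
    using smooth unfolding smooth_on_S3_def by blast
  have pp: "p \<bullet> p = 1" if "p \<in> V" for p
    using that W unfolding S3_def by (auto simp: dot_square_norm)
  have zz: "\<zeta> p \<bullet> \<zeta> p = 1" if "p \<in> V" for p
    using that unit_tangent by (auto simp: dot_square_norm)
  have zp: "\<zeta> p \<bullet> p = 0" if "p \<in> V" for p using that unit_tangent by auto
  have P1: "\<forall>p\<in>V. qmul (qconj p) (\<zeta> p) \<in> S2"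
  proof
    fix p assume pV: "p \<in> V"
    have "(qmul (qconj p) (\<zeta> p))$1 = 0" unfolding q_re using zp[OF pV] by (simp add: inner_commute)
    moreover have "norm (qmul (qconj p) (\<zeta> p)) = 1"
      unfolding norm_qmul norm_qconj using W unit_tangent pV unfolding S3_def by auto
    ultimately show "qmul (qconj p) (\<zeta> p) \<in> S2" unfolding S2_def by simp
  qed
  have circle: "\<zeta> (gc p (\<zeta> p) t) = - sin t *\<^sub>R p + cos t *\<^sub>R \<zeta> p" if "p \<in> V" for p t
    using circ great_circles that by blast
  have P2: "\<forall>p\<in>V. \<forall>t. qmul (qconj (gc p (\<zeta> p) t)) (\<zeta> (gc p (\<zeta> p) t)) = qmul (qconj p) (\<zeta> p)"
    using circle const_circle pp zz zp by simp
  have P3: "(\<Sum>i<3. map_hess (\<lambda>p. qmul (qconj p) (\<zeta> p)) p (e i)) = 0 \<longleftrightarrow>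
            (\<Sum>i<3. cov2 \<zeta> p (e i)) + (\<Sum>i<3. (norm (cov \<zeta> p (e i)))\<^sup>2) *\<^sub>R \<zeta> p = 0"
    if pV: "p \<in> V" and onb: "tangent_onb p e" for p e
  proof -
    define z where "z = \<zeta> p"
    define L where "L = frechet_derivative Z (at p)"
    define G where "G i = vector_derivative (\<lambda>t. vector_derivative (\<lambda>s. \<zeta> (gc p (e i) s)) (at t)) (at 0)" for i
    have ei: "e i \<bullet> e i = 1" "e i \<bullet> p = 0" if "i<3" for i
      using onb that unfolding tangent_onb_def by (auto simp: dot_square_norm)
    note cv = curve[OF U Zs ZV W unit_tangent pV]
    have Ck2: "Ck (Suc (Suc 0)) U Z" using Zs unfolding Cinf_on_def by blast
    have "Z differentiable_on U" using Ck2 by simp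
    then have "Z differentiable (at p)"
      using U pV differentiable_on_eq_differentiable_at by blast
    then have "(Z has_derivative L) (at p)"
      using frechet_derivative_works unfolding L_def by blast
    then have lin: "linear L" by (rule has_derivative_linear)
    have unitC: "L v \<bullet> z = 0 \<and> L v \<bullet> p = - (z \<bullet> v)" if "norm v = 1" "v \<bullet> p = 0" for v
      using cv(7,8)[of v] that unfolding L_def z_def by (auto simp: dot_square_norm)
    have C1: "L v \<bullet> z = 0" and C2: "L v \<bullet> p = - (z \<bullet> v)" if vp: "v \<bullet> p = 0" for v
    proof -
      have "L v \<bullet> z = 0 \<and> L v \<bullet> p = - (z \<bullet> v)"
      proof (cases "v = 0")
        case True then show ?thesis using lin by (simp add: linear_0)
      next
        case False
        define u where "u = (1 / norm v) *\<^sub>R v"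
        have un: "norm u = 1" "u \<bullet> p = 0" unfolding u_def using False vp by auto
        have vu: "v = norm v *\<^sub>R u" unfolding u_def using False by simp
        have "L v = norm v *\<^sub>R L u" by (subst vu) (simp add: linear_scale[OF lin])
        then show ?thesis using unitC[OF un] by (subst (3) vu) simp
      qed
      then show "L v \<bullet> z = 0" "L v \<bullet> p = - (z \<bullet> v)" by auto
    qed
    have C3: "L z = - p"
    proof -
      have zn: "z \<bullet> z = 1" "z \<bullet> p = 0" unfolding z_def using zz zp pV by auto
      have "vector_derivative (\<lambda>s. \<zeta> (gc p z s)) (at 0) = L z"
        using cv(1)[OF zn] unfolding L_def by simp
      moreover have "(\<lambda>s. \<zeta> (gc p z s)) = (\<lambda>s. - sin s *\<^sub>R p + cos s *\<^sub>R z)"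
        using circle[OF pV] unfolding z_def by auto
      moreover have "vector_derivative (\<lambda>s. - sin s *\<^sub>R p + cos s *\<^sub>R z) (at 0) = - p"
        using vector_derivative_at[OF gcd_deriv[of p z 0]] by simp
      ultimately show ?thesis by simp
    qed
    have compl: "z = (\<Sum>i<3. (z \<bullet> e i) *\<^sub>R e i)"
      by (rule completeness[OF pp[OF pV] onb]) (use zp pV z_def in simp)
    have G1: "G i \<bullet> p + 2 * (L (e i) \<bullet> e i) = 0" if "i<3" for i
      using cv(5)[OF ei[OF that]] unfolding G_def L_def by simp
    have G2: "L (e i) \<bullet> L (e i) + z \<bullet> G i = 0" if "i<3" for i
      using cv(6)[OF ei[OF that]] unfolding G_def L_def z_def by simp
    have mh: "(\<Sum>i<3. map_hess (\<lambda>p. qmul (qconj p) (\<zeta> p)) p (e i)) =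
      (\<Sum>i<3. tproj (qmul (qconj p) z) (qmul (qconj p) (G i) + 2 *\<^sub>R qmul (qconj (e i)) (L (e i)) - qmul (qconj p) z))"
      by (rule sum.cong[OF refl]) (use cv(2)[OF ei] in \<open>simp add: G_def L_def z_def\<close>)
    have c2: "(\<Sum>i<3. cov2 \<zeta> p (e i)) =
       (\<Sum>i<3. tproj p (G i - (G i \<bullet> p + L (e i) \<bullet> e i) *\<^sub>R p - (L (e i) \<bullet> p) *\<^sub>R e i))"
      by (rule sum.cong[OF refl]) (use cv(3)[OF ei] in \<open>simp add: G_def L_def\<close>)
    have c1: "(\<Sum>i<3. (norm (cov \<zeta> p (e i)))\<^sup>2) = (\<Sum>i<3. (norm (tproj p (L (e i))))\<^sup>2)"
      by (rule sum.cong[OF refl]) (use cv(4)[OF ei] in \<open>simp add: L_def\<close>)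
    show ?thesis
      unfolding mh c2 c1 z_def[symmetric]
      by (rule pointwise[OF pp[OF pV] _ _ onb compl lin C1 C2 C3 G1 G2])
         (use zz zp pV z_def in auto)
  qed
  have P3': "harmonic_map_on V (\<lambda>p. qmul (qconj p) (\<zeta> p)) \<longleftrightarrow> harmonic_unit_field_on V \<zeta>"
    unfolding harmonic_map_on_def harmonic_unit_field_on_def using P3 by blast
  show ?thesis using P1 P2 P3' by blast
qed


end
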